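(* Let $I\subsetneq\Delta_\sigma$ be $\lambda_\iota$-connected. Then $I_\iota(I)$ is $\lambda_\iota$-connected. More generally, every $J\subset\Delta_\sigma$ with $J\supset I_\iota(I)$ is $\lambda_\iota$-connected.
   Context: Setting. - $G$ is a connected noncompact semisimple real Lie group with finite center, $\iota:G\to\mathrm{GL}(W)$ is an almost faithful finite-dimensional real representation irreducible over $\mathbb R$, $\sigma$ an involution of $G$, and $H$ a symmetric subgroup for $\sigma$ fixing a nonzero $v_0\in W$. - $\theta$ is a Cartan involution commuting with $\sigma$, $\mathfrak g=\mathfrak k\oplus\mathfrak p=\mathfrak h\oplus\mathfrak q$ the eigenspace decompositions, and $\mathfrak a$ a maximal abelian subspace of $\mathfrak p\cap\mathfrak q$. - $\Sigma_\sigma$ is the restricted root system with root spaces $\mathfrak g_\alpha$, positive roots $\Sigma^+_\sigma$ and simple roots $\Delta_\sigma$. - $2\rho=\sum_{\alpha\in\Sigma_\sigma^+}(\dim\mathfrak g_\alpha)\alpha=\sum_{\alpha\in\Delta_\sigma}u_\alpha\alpha$, and $\lambda_\iota=\sum_{\alpha\in\Delta_\sigma}m_\alpha\alpha$ is the highest weight of $\mathfrak a$ on $W$ (all $u_\alpha,m_\alpha>0$). - $I\subset\Delta_\sigma$ is $\lambda_\iota$-connected if $I\cup\{\lambda_\iota\}$ is not a union of two nonempty subsets orthogonal for the Killing form. - For $\lambda_\iota$-connected $I\subsetneq\Delta_\sigma$: $a_\iota(I)=\max\{u_\alpha/m_\alpha:\alpha\in\Delta_\sigma\setminus I\}$ and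 $I_\iota(I)=I\cup\{\alpha\in\Delta_\sigma\setminus I:u_\alpha/m_\alpha<a_\iota(I)\}$. *)

theory Defs
  imports "HOL-Analysis.Analysis"
begin

text \<open>Abstract combinatorial model of the restricted root system of (g, sigma) on a,
  where a carries the (positive definite) Killing form, modelled as the inner product
  of a Euclidean space; roots are identified with vectors via the Killing form.\<close>

definition refl_vec :: "'v::euclidean_space \<Rightarrow> 'v \<Rightarrow> 'v" where
  "refl_vec \<alpha> \<beta> = \<beta> - (2 * (\<beta> \<bullet> \<alpha>) / (\<alpha> \<bullet> \<alpha>)) *\<^sub>R \<alpha>"

text \<open>A (possibly non-reduced) crystallographic root system; restricted root systems may be non-reduced.\<close>
definition root_system :: "'v::euclidean_space set \<Rightarrow> bool" where
  "root_system \<Phi> \<longleftrightarrow> finite \<Phi> \<and> 0 \<notin> \<Phi> \<and>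
     (\<forall>\<alpha>\<in>\<Phi>. \<forall>\<beta>\<in>\<Phi>. refl_vec \<alpha> \<beta> \<in> \<Phi> \<and> 2 * (\<beta> \<bullet> \<alpha>) / (\<alpha> \<bullet> \<alpha>) \<in> \<int>)"

definition simple_system :: "'v::euclidean_space set \<Rightarrow> 'v set \<Rightarrow> bool" where
  "simple_system \<Phi> \<Delta> \<longleftrightarrow> \<Delta> \<subseteq> \<Phi> \<and> independent \<Delta> \<and>
     (\<forall>\<beta>\<in>\<Phi>. \<exists>c. (\<forall>\<alpha>\<in>\<Delta>. c \<alpha> \<in> \<int>) \<and> \<beta> = (\<Sum>\<alpha>\<in>\<Delta>. c \<alpha> *\<^sub>R \<alpha>) \<and>
        ((\<forall>\<alpha>\<in>\<Delta>. c \<alpha> \<ge> 0) \<or> (\<forall>\<alpha>\<in>\<Delta>. c \<alpha> \<le> 0)))"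

definition pos_roots :: "'v::euclidean_space set \<Rightarrow> 'v set \<Rightarrow> 'v set" where
  "pos_roots \<Phi> \<Delta> = {\<beta>\<in>\<Phi>. \<exists>c. \<beta> = (\<Sum>\<alpha>\<in>\<Delta>. c \<alpha> *\<^sub>R \<alpha>) \<and> (\<forall>\<alpha>\<in>\<Delta>. c \<alpha> \<ge> 0)}"

text \<open>2 rho = sum over positive roots of (dim g_alpha) alpha; dimg alpha = dim g_alpha.\<close>
definition two_rho :: "'v::euclidean_space set \<Rightarrow> 'v set \<Rightarrow> ('v \<Rightarrow> nat) \<Rightarrow> 'v" where
  "two_rho \<Phi> \<Delta> dimg = (\<Sum>\<beta>\<in>pos_roots \<Phi> \<Delta>. real (dimg \<beta>) *\<^sub>R \<beta>)"

definition lam_connected :: "'v::euclidean_space \<Rightarrow> 'v set \<Rightarrow> bool" where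
  "lam_connected lam S \<longleftrightarrow>
     \<not> (\<exists>A B. A \<noteq> {} \<and> B \<noteq> {} \<and> A \<union> B = S \<union> {lam} \<and> A \<inter> B = {} \<and>
           (\<forall>x\<in>A. \<forall>y\<in>B. x \<bullet> y = 0))"

definition a_iota :: "'v set \<Rightarrow> ('v \<Rightarrow> real) \<Rightarrow> ('v \<Rightarrow> real) \<Rightarrow> 'v set \<Rightarrow> real" where
  "a_iota \<Delta> u m I = Max ((\<lambda>\<alpha>. u \<alpha> / m \<alpha>) ` (\<Delta> - I))"

definition I_iota :: "'v set \<Rightarrow> ('v \<Rightarrow> real) \<Rightarrow> ('v \<Rightarrow> real) \<Rightarrow> 'v set \<Rightarrow> 'v set" where
  "I_iota \<Delta> u m I = I \<union> {\<alpha>\<in>\<Delta> - I. u \<alpha> / m \<alpha> < a_iota \<Delta> u m I}"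

end

theory Submission
  imports Defs
begin

lemma coeff_unique:
  fixes D :: "'v::euclidean_space set"
  assumes "finite D" "independent D"
    and "(\<Sum>a\<in>D. c a *\<^sub>R a) = (\<Sum>a\<in>D. d a *\<^sub>R a)" "x \<in> D"
  shows "c x = d x"
proof (rule ccontr)
  assume "c x \<noteq> d x"
  have "(\<Sum>a\<in>D. (c a - d a) *\<^sub>R a) = 0"
    using assms(3) by (simp add: scaleR_diff_left sum_subtractf)
  hence "dependent D" using \<open>c x \<noteq> d x\<close> assms(1,4)
    by (subst real_vector.dependent_finite[OF assms(1)]) (rule exI[of _ "\<lambda>a. c a - d a"], auto)
  thus False using assms(2) by simp
qed

lemma refl_inner:
  fixes b g :: "'v::euclidean_space"
  assumes "b \<noteq> 0"
  shows "refl_vec b g \<bullet> b = - (g \<bullet> b)"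
  using assms by (simp add: refl_vec_def inner_diff_left algebra_simps)

lemma refl_invol:
  fixes b g :: "'v::euclidean_space"
  assumes "b \<noteq> 0"
  shows "refl_vec b (refl_vec b g) = g"
proof -
  have "refl_vec b (refl_vec b g) = refl_vec b g + (2 * (g \<bullet> b) / (b \<bullet> b)) *\<^sub>R b"
    using refl_inner[OF assms, of g] by (simp add: refl_vec_def)
  also have "\<dots> = g" by (simp add: refl_vec_def)
  finally show ?thesis .
qed

lemma sum_delta_vec:
  fixes D :: "'v::euclidean_space set"
  assumes "finite D" "b \<in> D"
  shows "(\<Sum>a\<in>D. (if a = b then t else 0) *\<^sub>R a) = t *\<^sub>R b"
proof -
  have "(\<Sum>a\<in>D. (if a = b then t else 0) *\<^sub>R a) = (\<Sum>a\<in>D. if a = b then t *\<^sub>R b else 0)"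
    by (rule sum.cong) auto
  also have "\<dots> = t *\<^sub>R b" using assms by simp
  finally show ?thesis .
qed

lemma rho_pos:
  fixes \<Phi> \<Delta> :: "'v::euclidean_space set" and dimg :: "'v \<Rightarrow> nat"
  assumes rs: "root_system \<Phi>" and ss: "simple_system \<Phi> \<Delta>"
    and dpos: "\<forall>\<alpha>\<in>\<Phi>. dimg \<alpha> > 0"
    and dinv: "\<forall>\<alpha>\<in>\<Phi>. \<forall>\<beta>\<in>\<Phi>. dimg (refl_vec \<alpha> \<beta>) = dimg \<beta>"
    and b: "\<beta> \<in> \<Delta>"
  shows "two_rho \<Phi> \<Delta> dimg \<bullet> \<beta> > 0"
proof -
  have finPhi: "finite \<Phi>" and z: "0 \<notin> \<Phi>"
    and rsc: "\<And>x y. x \<in> \<Phi> \<Longrightarrow> y \<in> \<Phi> \<Longrightarrow> refl_vec x y \<in> \<Phi>"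
    using rs unfolding root_system_def by auto
  have DP: "\<Delta> \<subseteq> \<Phi>" and ind: "independent \<Delta>"
    and rep: "\<And>y. y \<in> \<Phi> \<Longrightarrow> \<exists>c. (\<forall>\<alpha>\<in>\<Delta>. c \<alpha> \<in> \<int>) \<and> y = (\<Sum>\<alpha>\<in>\<Delta>. c \<alpha> *\<^sub>R \<alpha>) \<and>
        ((\<forall>\<alpha>\<in>\<Delta>. c \<alpha> \<ge> 0) \<or> (\<forall>\<alpha>\<in>\<Delta>. c \<alpha> \<le> 0))"
    using ss unfolding simple_system_def by auto
  have finD: "finite \<Delta>" using DP finPhi finite_subset by blast
  have bP: "\<beta> \<in> \<Phi>" using b DP by auto
  have bnz: "\<beta> \<noteq> 0" using bP z by auto
  define P where "P = pos_roots \<Phi> \<Delta>"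
  have PPhi: "P \<subseteq> \<Phi>" unfolding P_def pos_roots_def by auto
  have finP: "finite P" using PPhi finPhi finite_subset by blast
  define s where "s = refl_vec \<beta>"
  define M where "M = {g\<in>P. \<exists>t. g = t *\<^sub>R \<beta>}"
  define N where "N = P - M"
  define f where "f g = real (dimg g) * (g \<bullet> \<beta>)" for g
  have ss_id: "s (s g) = g" for g unfolding s_def using refl_invol[OF bnz] by simp
  have s_mult: "s (t *\<^sub>R \<beta>) = (- t) *\<^sub>R \<beta>" for t
    unfolding s_def refl_vec_def using bnz by (simp add: algebra_simps) (metis mult_2_right scaleR_add_left)
  have sN: "s g \<in> N" if gN: "g \<in> N" for g
  proof -
    have gP: "g \<in> P" and nm: "\<And>t. g \<noteq> t *\<^sub>R \<beta>" using gN unfolding N_def M_def by auto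
    have gPhi: "g \<in> \<Phi>" using gP PPhi by auto
    obtain c where gc: "g = (\<Sum>\<alpha>\<in>\<Delta>. c \<alpha> *\<^sub>R \<alpha>)" and cpos: "\<forall>\<alpha>\<in>\<Delta>. c \<alpha> \<ge> 0"
      using gP unfolding P_def pos_roots_def by auto
    obtain a where aD: "a \<in> \<Delta>" and ab: "a \<noteq> \<beta>" and ca: "c a \<noteq> 0"
    proof (rule ccontr)
      assume "\<not> thesis"
      hence h: "\<forall>a\<in>\<Delta>. a \<noteq> \<beta> \<longrightarrow> c a = 0" using that by blast
      have "g = (\<Sum>\<alpha>\<in>\<Delta>. (if \<alpha> = \<beta> then c \<beta> else 0) *\<^sub>R \<alpha>)"
        unfolding gc using h by (intro sum.cong) auto
      also have "\<dots> = c \<beta> *\<^sub>R \<beta>" using sum_delta_vec[OF finD b] .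
      finally show False using nm by blast
    qed
    have ca': "c a > 0" using ca cpos aD by force
    have sPhi: "s g \<in> \<Phi>" unfolding s_def using rsc[OF bP gPhi] .
    obtain d where sd: "s g = (\<Sum>\<alpha>\<in>\<Delta>. d \<alpha> *\<^sub>R \<alpha>)"
      and dsign: "(\<forall>\<alpha>\<in>\<Delta>. d \<alpha> \<ge> 0) \<or> (\<forall>\<alpha>\<in>\<Delta>. d \<alpha> \<le> 0)"
      using rep[OF sPhi] by blast
    define k where "k = 2 * (g \<bullet> \<beta>) / (\<beta> \<bullet> \<beta>)"
    have "s g = g - k *\<^sub>R \<beta>" unfolding s_def refl_vec_def k_def by simp
    also have "\<dots> = (\<Sum>\<alpha>\<in>\<Delta>. c \<alpha> *\<^sub>R \<alpha>) - (\<Sum>\<alpha>\<in>\<Delta>. (if \<alpha> = \<beta> then k else 0) *\<^sub>R \<alpha>)"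
      using gc sum_delta_vec[OF finD b, of k] by simp
    also have "\<dots> = (\<Sum>\<alpha>\<in>\<Delta>. (c \<alpha> - (if \<alpha> = \<beta> then k else 0)) *\<^sub>R \<alpha>)"
      by (simp add: scaleR_diff_left sum_subtractf)
    finally have "(\<Sum>\<alpha>\<in>\<Delta>. d \<alpha> *\<^sub>R \<alpha>) = (\<Sum>\<alpha>\<in>\<Delta>. (c \<alpha> - (if \<alpha> = \<beta> then k else 0)) *\<^sub>R \<alpha>)"
      using sd by simp
    from coeff_unique[OF finD ind this aD] have "d a = c a" using ab by simp
    hence dpos': "\<forall>\<alpha>\<in>\<Delta>. d \<alpha> \<ge> 0" using dsign ca' aD by force
    have sP: "s g \<in> P" unfolding P_def pos_roots_def using sPhi sd dpos' by blast
    have "s g \<notin> M"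
    proof
      assume "s g \<in> M"
      then obtain t where "s g = t *\<^sub>R \<beta>" unfolding M_def by auto
      hence "g = (- t) *\<^sub>R \<beta>" using ss_id[of g] s_mult[of t] by simp
      thus False using nm by blast
    qed
    thus ?thesis using sP unfolding N_def by auto
  qed
  have fs: "f (s g) = - f g" if "g \<in> N" for g
  proof -
    have gPhi: "g \<in> \<Phi>" using that PPhi unfolding N_def by auto
    have "dimg (s g) = dimg g" unfolding s_def using dinv bP gPhi by auto
    thus ?thesis unfolding f_def s_def using refl_inner[OF bnz, of g] by simp
  qed
  have "sum f N = sum (\<lambda>g. f (s g)) N"
    by (rule sum.reindex_bij_witness[where i=s and j=s]) (auto simp: ss_id sN)
  also have "\<dots> = - sum f N" using fs by (simp add: sum_negf)
  finally have N0: "sum f N = 0" by simp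
  have Mnn: "f g \<ge> 0" if gM: "g \<in> M" for g
  proof -
    obtain t where gt: "g = t *\<^sub>R \<beta>" and gP: "g \<in> P" using gM unfolding M_def by auto
    obtain c where gc: "g = (\<Sum>\<alpha>\<in>\<Delta>. c \<alpha> *\<^sub>R \<alpha>)" and cpos: "\<forall>\<alpha>\<in>\<Delta>. c \<alpha> \<ge> 0"
      using gP unfolding P_def pos_roots_def by auto
    have "(\<Sum>\<alpha>\<in>\<Delta>. c \<alpha> *\<^sub>R \<alpha>) = (\<Sum>\<alpha>\<in>\<Delta>. (if \<alpha> = \<beta> then t else 0) *\<^sub>R \<alpha>)"
      using gc gt sum_delta_vec[OF finD b, of t] by simp
    from coeff_unique[OF finD ind this b] have "c \<beta> = t" by simp
    hence "t \<ge> 0" using cpos b by auto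
    thus ?thesis unfolding f_def gt by simp
  qed
  have bM: "\<beta> \<in> M"
  proof -
    have "\<beta> = (\<Sum>\<alpha>\<in>\<Delta>. (if \<alpha> = \<beta> then 1 else 0) *\<^sub>R \<alpha>)"
      using sum_delta_vec[OF finD b, of 1] by simp
    hence "\<beta> \<in> P" unfolding P_def pos_roots_def using bP
      by (intro CollectI conjI bP exI[of _ "\<lambda>\<alpha>. if \<alpha> = \<beta> then 1 else 0"]) auto
    thus ?thesis unfolding M_def by (auto intro: exI[of _ 1])
  qed
  have fb: "f \<beta> > 0" unfolding f_def using dpos bP bnz by simp
  have finM: "finite M" using finP unfolding M_def by auto
  have Mpos: "sum f M > 0" using sum_pos2[of M \<beta> f] finM bM fb Mnn by blast
  have "two_rho \<Phi> \<Delta> dimg \<bullet> \<beta> = sum f P"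
    unfolding two_rho_def P_def f_def by (simp add: inner_sum_left)
  also have "\<dots> = sum f M + sum f N"
    unfolding N_def using finP M_def by (subst sum.subset_diff[of M P]) auto
  finally show ?thesis using N0 Mpos by simp
qed

lemma key:
  fixes \<Delta> I J A B :: "'v::euclidean_space set" and u m :: "'v \<Rightarrow> real" and lam :: 'v
  assumes finD: "finite \<Delta>"
    and rho: "\<forall>\<beta>\<in>\<Delta>. (\<Sum>\<alpha>\<in>\<Delta>. u \<alpha> *\<^sub>R \<alpha>) \<bullet> \<beta> > 0"
    and lamd: "lam = (\<Sum>\<alpha>\<in>\<Delta>. m \<alpha> *\<^sub>R \<alpha>)"
    and mpos: "\<forall>\<alpha>\<in>\<Delta>. m \<alpha> > 0"
    and IsD: "I \<subset> \<Delta>" and conI: "lam_connected lam I"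
    and J1: "I_iota \<Delta> u m I \<subseteq> J" and J2: "J \<subseteq> \<Delta>"
    and Bne: "B \<noteq> {}" and AB: "A \<union> B = J \<union> {lam}" and ABd: "A \<inter> B = {}"
    and orth: "\<forall>x\<in>A. \<forall>y\<in>B. x \<bullet> y = 0" and lA: "lam \<in> A"
  shows False
proof -
  define a where "a = a_iota \<Delta> u m I"
  have fin2: "finite ((\<lambda>\<alpha>. u \<alpha> / m \<alpha>) ` (\<Delta> - I))" using finD by auto
  have h1: "u g / m g \<le> a" if "g \<in> \<Delta> - I" for g
    unfolding a_def a_iota_def using fin2 that by (intro Max_ge) auto
  have h1': "u g \<le> a * m g" if "g \<in> \<Delta> - I" for g
    using h1[OF that] mpos that by (simp add: pos_divide_le_eq)
  have IJ: "I \<subseteq> J" using J1 unfolding I_iota_def by auto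
  have h2: "u g = a * m g" if "g \<in> \<Delta> - J" for g
  proof -
    have "g \<in> \<Delta> - I" using that IJ by auto
    moreover have "\<not> u g / m g < a" using that J1 unfolding I_iota_def a_def by auto
    ultimately have "u g / m g = a" using h1 by force
    thus ?thesis using mpos that by (auto simp: field_simps)
  qed
  have BI: "B \<inter> I = {}"
  proof (rule ccontr)
    assume ne: "B \<inter> I \<noteq> {}"
    define A' where "A' = A \<inter> (I \<union> {lam})"
    define B' where "B' = B \<inter> (I \<union> {lam})"
    have 1: "A' \<noteq> {}" using lA unfolding A'_def by auto
    have 2: "B' \<noteq> {}" using ne unfolding B'_def by auto
    have 3: "A' \<union> B' = I \<union> {lam}"
    proof -
      have "I \<union> {lam} \<subseteq> A \<union> B" using AB IJ by auto
      thus ?thesis unfolding A'_def B'_def by auto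
    qed
    have 4: "A' \<inter> B' = {}" using ABd unfolding A'_def B'_def by auto
    have 5: "\<forall>x\<in>A'. \<forall>y\<in>B'. x \<bullet> y = 0" using orth unfolding A'_def B'_def by auto
    have "\<exists>A' B'. A' \<noteq> {} \<and> B' \<noteq> {} \<and> A' \<union> B' = I \<union> {lam} \<and> A' \<inter> B' = {} \<and>
           (\<forall>x\<in>A'. \<forall>y\<in>B'. x \<bullet> y = 0)"
      using 1 2 3 4 5 by blast
    thus False using conI unfolding lam_connected_def by blast
  qed
  have lB: "lam \<notin> B" using lA ABd by auto
  have BJ: "B \<subseteq> J" using AB lB by auto
  have BD: "B \<subseteq> \<Delta> - I" using BJ J2 BI by auto
  have finB: "finite B" using BD finD finite_subset by blast
  define c where "c g = u g - a * m g" for g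
  have cle: "c g \<le> 0" if "g \<in> B" for g using h1'[of g] BD that unfolding c_def by auto
  define x where "x = (\<Sum>g\<in>B. c g *\<^sub>R g)"
  have xb: "x \<bullet> b > 0" if bB: "b \<in> B" for b
  proof -
    have lb: "lam \<bullet> b = 0" using orth lA bB by auto
    have "(\<Sum>\<alpha>\<in>\<Delta>. u \<alpha> *\<^sub>R \<alpha>) \<bullet> b = (\<Sum>\<alpha>\<in>\<Delta>. u \<alpha> *\<^sub>R \<alpha>) \<bullet> b - a * (lam \<bullet> b)"
      using lb by simp
    also have "\<dots> = (\<Sum>\<alpha>\<in>\<Delta>. c \<alpha> * (\<alpha> \<bullet> b))"
      unfolding lamd c_def by (simp add: inner_sum_left sum_distrib_left algebra_simps sum_subtractf)
    also have "\<dots> = (\<Sum>\<alpha>\<in>B. c \<alpha> * (\<alpha> \<bullet> b))"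
    proof (rule sum.mono_neutral_right[OF finD])
      show "B \<subseteq> \<Delta>" using BD by auto
      show "\<forall>i\<in>\<Delta> - B. c i * (i \<bullet> b) = 0"
      proof
        fix i assume i: "i \<in> \<Delta> - B"
        show "c i * (i \<bullet> b) = 0"
        proof (cases "i \<in> J")
          case True
          hence "i \<in> A" using AB i by auto
          thus ?thesis using orth bB by auto
        next
          case False
          thus ?thesis using h2[of i] i unfolding c_def by auto
        qed
      qed
    qed
    also have "\<dots> = x \<bullet> b" unfolding x_def by (simp add: inner_sum_left)
    moreover have "b \<in> \<Delta>" using bB BD by auto
    ultimately show ?thesis using rho by metis
  qed
  have "x \<bullet> x = (\<Sum>g\<in>B. c g * (g \<bullet> x))" unfolding x_def by (simp add: inner_sum_left)
  also have "\<dots> \<le> 0"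
  proof (rule sum_nonpos)
    fix g assume "g \<in> B"
    thus "c g * (g \<bullet> x) \<le> 0" using cle xb[of g] by (simp add: inner_commute mult_nonpos_nonneg)
  qed
  finally have "x = 0" by (metis inner_gt_zero_iff not_le)
  moreover obtain b where "b \<in> B" using Bne by auto
  ultimately show False using xb by fastforce
qed

theorem proposition5p2:
  fixes \<Phi> \<Delta> I :: "'v::euclidean_space set"
    and dimg :: "'v \<Rightarrow> nat" and u m :: "'v \<Rightarrow> real" and lam :: 'v
  assumes "root_system \<Phi>"
    and "simple_system \<Phi> \<Delta>"
    and "\<forall>\<alpha>\<in>\<Phi>. dimg \<alpha> > 0"
    and "\<forall>\<alpha>\<in>\<Phi>. \<forall>\<beta>\<in>\<Phi>. dimg (refl_vec \<alpha> \<beta>) = dimg \<beta>"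
    and "two_rho \<Phi> \<Delta> dimg = (\<Sum>\<alpha>\<in>\<Delta>. u \<alpha> *\<^sub>R \<alpha>)"
    and "\<forall>\<alpha>\<in>\<Delta>. u \<alpha> > 0"
    and "lam = (\<Sum>\<alpha>\<in>\<Delta>. m \<alpha> *\<^sub>R \<alpha>)"
    and "\<forall>\<alpha>\<in>\<Delta>. m \<alpha> > 0"
    and "\<forall>\<alpha>\<in>\<Delta>. lam \<bullet> \<alpha> \<ge> 0"
    and "I \<subset> \<Delta>"
    and "lam_connected lam I"
  shows "lam_connected lam (I_iota \<Delta> u m I) \<and>
         (\<forall>J. I_iota \<Delta> u m I \<subseteq> J \<and> J \<subseteq> \<Delta> \<longrightarrow> lam_connected lam J)"
proof -
  have finD: "finite \<Delta>"
    using assms(1,2) unfolding root_system_def simple_system_def using finite_subset by blast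
  have rho: "\<forall>\<beta>\<in>\<Delta>. (\<Sum>\<alpha>\<in>\<Delta>. u \<alpha> *\<^sub>R \<alpha>) \<bullet> \<beta> > 0"
    using rho_pos[OF assms(1-4)] assms(5) by auto
  have main: "lam_connected lam J" if J1: "I_iota \<Delta> u m I \<subseteq> J" and J2: "J \<subseteq> \<Delta>" for J
  proof -
    have False if "A \<noteq> {}" "B \<noteq> {}" "A \<union> B = J \<union> {lam}" "A \<inter> B = {}"
      "\<forall>x\<in>A. \<forall>y\<in>B. x \<bullet> y = 0" for A B
    proof (cases "lam \<in> A")
      case True
      show False
        by (rule key[OF finD rho assms(7,8,10,11) J1 J2, of B A]) (use that True in auto)
    next
      case False
      hence "lam \<in> B" using that by auto
      moreover have "\<forall>x\<in>B. \<forall>y\<in>A. x \<bullet> y = 0" using that(5) by (metis inner_commute)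
      ultimately show False
        by (intro key[OF finD rho assms(7,8,10,11) J1 J2, of A B]) (use that in auto)
    qed
    thus ?thesis unfolding lam_connected_def by blast
  qed
  have "I_iota \<Delta> u m I \<subseteq> \<Delta>" unfolding I_iota_def using assms(10) by auto
  thus ?thesis using main by blast
qed

end
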